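(* Let $\nu$ and $\nu'$ be discrete distributions supported on a total of $\ell$ atoms in $[-1,1]$. If $|m_i(\nu)-m_i(\nu')|\le\delta$ for $i=1,\dots,\ell-1$, then \[W_1(\nu,\nu')\le O\big(\ell\delta^{\frac{1}{\ell-1}}\big).\]
   Context: $m_i(\pi)=\mathbb{E}_\pi X^i$; "supported on a total of $\ell$ atoms" means the union of the supports has $\ell$ points. $W_1$ is the 1-Wasserstein distance on $\mathbb{R}$; $O(\cdot)$ hides an absolute constant. *)

theory Defs
  imports "HOL-Probability.Probability"
begin

definition moment :: "nat \<Rightarrow> real pmf \<Rightarrow> real" where
  "moment i p = measure_pmf.expectation p (\<lambda>x. x ^ i)"

definition W1 :: "real pmf \<Rightarrow> real pmf \<Rightarrow> real" where
  "W1 p q = Inf {measure_pmf.expectation r (\<lambda>(x, y). \<bar>x - y\<bar>) | r.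
                   map_pmf fst r = p \<and> map_pmf snd r = q}"

end

theory Submission
  imports Defs "HOL-Computational_Algebra.Polynomial"
begin

fun costA :: "real \<Rightarrow> real list \<Rightarrow> (real \<Rightarrow> real) \<Rightarrow> real" where
  "costA s (x # y # zs) d = \<bar>s + d x\<bar> * (y - x) + costA (s + d x) (y # zs) d"
| "costA s _ d = 0"

lemma costA_upd: "y \<notin> set zs \<Longrightarrow> costA t zs (d(y := v)) = costA t zs d"
  by (induction t zs d rule: costA.induct) auto

lemma costA_shift:
  assumes "y \<notin> set zs"
  shows "costA 0 (y # zs) (d(y := d y + s)) = costA s (y # zs) d"
proof (cases zs)
  case Nil then show ?thesis by simp
next
  case (Cons z zs')
  have "costA (s + d y) (z # zs') (d(y := s + d y)) = costA (s + d y) (z # zs') d"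
    using assms Cons by (intro costA_upd) simp
  then show ?thesis using assms Cons by (simp add: add.commute)
qed

lemma costA_neg: "costA (- s) xs (\<lambda>z. - d z) = costA s xs d"
  by (induction s xs d rule: costA.induct) (auto simp: abs_minus_commute)

lemma costA_bound:
  assumes "\<forall>k. Suc k < length xs \<longrightarrow> \<bar>s + (\<Sum>j\<le>k. d (xs ! j))\<bar> * (xs ! Suc k - xs ! k) \<le> B"
  shows "costA s xs d \<le> real (length xs - 1) * B"
  using assms
proof (induction s xs d rule: costA.induct)
  case (1 s x y zs d)
  have h0: "\<bar>s + d x\<bar> * (y - x) \<le> B" using "1.prems"[rule_format, of 0] by simp
  have "costA (s + d x) (y # zs) d \<le> real (length (y # zs) - 1) * B"
  proof (rule "1.IH", intro allI impI)
    fix k assume "Suc k < length (y # zs)"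
    then have "\<bar>s + (\<Sum>j\<le>Suc k. d ((x # y # zs) ! j))\<bar> * ((x # y # zs) ! Suc (Suc k) - (x # y # zs) ! Suc k) \<le> B"
      using "1.prems" by auto
    moreover have "(\<Sum>j\<le>Suc k. d ((x # y # zs) ! j)) = d x + (\<Sum>j\<le>k. d ((y # zs) ! j))"
      by (subst sum.atMost_Suc_shift) simp
    ultimately show "\<bar>s + d x + (\<Sum>j\<le>k. d ((y # zs) ! j))\<bar> * ((y # zs) ! Suc k - (y # zs) ! k) \<le> B"
      by (simp add: add.assoc)
  qed
  then show ?case using h0 by (simp add: algebra_simps)
qed auto

definition cpl :: "real list \<Rightarrow> (real \<Rightarrow> real) \<Rightarrow> (real \<Rightarrow> real) \<Rightarrow> (real \<Rightarrow> real \<Rightarrow> real) \<Rightarrow> bool" where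
  "cpl xs p q c \<longleftrightarrow> (\<forall>u v. 0 \<le> c u v) \<and> (\<forall>u\<in>set xs. (\<Sum>v\<in>set xs. c u v) = p u)
     \<and> (\<forall>v\<in>set xs. (\<Sum>u\<in>set xs. c u v) = q v)
     \<and> (\<Sum>u\<in>set xs. \<Sum>v\<in>set xs. c u v * \<bar>u - v\<bar>) \<le> costA 0 xs (\<lambda>z. p z - q z)"

lemma cpl_swap:
  assumes "cpl xs p q c" shows "cpl xs q p (\<lambda>u v. c v u)"
proof -
  have "costA 0 xs (\<lambda>z. q z - p z) = costA (- 0) xs (\<lambda>z. - (p z - q z))" by simp
  also have "\<dots> = costA 0 xs (\<lambda>z. p z - q z)" by (rule costA_neg)
  finally have e: "costA 0 xs (\<lambda>z. q z - p z) = costA 0 xs (\<lambda>z. p z - q z)" .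
  have "(\<Sum>u\<in>set xs. \<Sum>v\<in>set xs. c v u * \<bar>u - v\<bar>) = (\<Sum>v\<in>set xs. \<Sum>u\<in>set xs. c v u * \<bar>v - u\<bar>)"
    by (subst sum.swap) (simp add: abs_minus_commute)
  then show ?thesis using assms e unfolding cpl_def by auto
qed

lemma cpl_step:
  fixes x y :: real
  assumes IH: "\<And>p q. (\<forall>u. 0 \<le> p u) \<Longrightarrow> (\<forall>u. 0 \<le> q u) \<Longrightarrow>
        (\<Sum>u\<in>set (y # zs). p u) = (\<Sum>u\<in>set (y # zs). q u) \<Longrightarrow> \<exists>c. cpl (y # zs) p q c"
    and xy: "x < y" and xn: "x \<notin> set (y # zs)" and yn: "y \<notin> set zs"
    and pn: "\<forall>u. 0 \<le> p u" and qn: "\<forall>u. 0 \<le> q u"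
    and sm: "(\<Sum>u\<in>set (x # y # zs). p u) = (\<Sum>u\<in>set (x # y # zs). q u)"
    and ab: "q x \<le> p x"
  shows "\<exists>c. cpl (x # y # zs) p q c"
proof -
  define a where "a = p x"
  define b where "b = q x"
  define p' where "p' = p(y := p y + (a - b))"
  let ?T = "set (y # zs)"
  have fin: "finite ?T" by simp
  have p'n: "\<forall>u. 0 \<le> p' u" using pn ab unfolding p'_def a_def b_def by auto
  have sx: "(\<Sum>u\<in>set (x # y # zs). f u) = f x + (\<Sum>u\<in>?T. f u)" for f :: "real \<Rightarrow> real"
    using xn by (simp add: sum.insert)
  have sy: "(\<Sum>u\<in>?T. f u) = f y + (\<Sum>u\<in>set zs. f u)" for f :: "real \<Rightarrow> real"
    using yn by (simp add: sum.insert)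
  have zz: "(\<Sum>u\<in>set zs. p' u) = (\<Sum>u\<in>set zs. p u)"
    by (rule sum.cong) (use yn in \<open>auto simp: p'_def\<close>)
  have "(\<Sum>u\<in>?T. p' u) = (\<Sum>u\<in>?T. p u) + (a - b)"
    unfolding sy zz by (simp add: p'_def)
  also have "\<dots> = (\<Sum>u\<in>?T. q u)" using sm unfolding sx a_def b_def by simp
  finally have sm': "(\<Sum>u\<in>?T. p' u) = (\<Sum>u\<in>?T. q u)" .
  obtain c' where c': "cpl (y # zs) p' q c'" using IH[OF p'n qn sm'] by blast
  have c'n: "\<And>u v. 0 \<le> c' u v" using c' unfolding cpl_def by blast
  have c'r: "\<And>u. u \<in> ?T \<Longrightarrow> (\<Sum>v\<in>?T. c' u v) = p' u" using c' unfolding cpl_def by blast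
  have c'c: "\<And>v. v \<in> ?T \<Longrightarrow> (\<Sum>u\<in>?T. c' u v) = q v" using c' unfolding cpl_def by blast
  have c'cost: "(\<Sum>u\<in>?T. \<Sum>v\<in>?T. c' u v * \<bar>u - v\<bar>) \<le> costA 0 (y # zs) (\<lambda>z. p' z - q z)"
    using c' unfolding cpl_def by blast
  define la where "la = (a - b) / p' y"
  define mu where "mu = p y / p' y"
  have p'y: "p' y = p y + (a - b)" unfolding p'_def by simp
  have lan: "0 \<le> la" and mun: "0 \<le> mu" unfolding la_def mu_def using p'n pn ab a_def b_def
    by auto
  have lamu: "la * c' y v + mu * c' y v = c' y v" if vT: "v \<in> ?T" for v
  proof (cases "p' y = 0")
    case True
    then have "(\<Sum>v\<in>?T. c' y v) = 0" using c'r by simp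
    then have "\<forall>v\<in>?T. c' y v = 0" using sum_nonneg_eq_0_iff[OF fin] c'n by blast
    then show ?thesis using True vT unfolding la_def mu_def by auto
  next
    case False
    have "la + mu = ((a - b) + p y) / p' y" unfolding la_def mu_def by (simp add: add_divide_distrib)
    also have "\<dots> = 1" using False p'y by simp
    finally have "la + mu = 1" .
    then show ?thesis by (metis distrib_right mult_1_left)
  qed
  have la_sum: "la * p' y = a - b" and mu_sum: "mu * p' y = p y"
  proof -
    have "p' y = 0 \<Longrightarrow> a - b = 0 \<and> p y = 0" using p'y pn ab a_def b_def by (smt (verit))
    then show "la * p' y = a - b" "mu * p' y = p y" unfolding la_def mu_def by auto
  qed
  have lam1: "la + mu \<le> 1"
  proof (cases "p' y = 0")
    case True then show ?thesis unfolding la_def mu_def by simp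
  next
    case False
    have "la + mu = ((a - b) + p y) / p' y" unfolding la_def mu_def by (simp add: add_divide_distrib)
    also have "\<dots> = 1" using False p'y by simp
    finally show ?thesis by simp
  qed
  define c where "c = (\<lambda>u v. if v = x then (if u = x then b else 0) else
      if u = x then la * c' y v else if u = y then mu * c' y v else c' u v)"
  have xy': "x \<noteq> y" using xy by simp
  have xy'': "y \<noteq> x" using xy by simp
  have cn: "\<forall>u v. 0 \<le> c u v" unfolding c_def using c'n lan mun qn b_def by auto
  have xT: "\<And>v. v \<in> ?T \<Longrightarrow> v \<noteq> x" using xn by auto
  have row: "\<forall>u\<in>set (x # y # zs). (\<Sum>v\<in>set (x # y # zs). c u v) = p u"
  proof
    fix u assume u: "u \<in> set (x # y # zs)"
    have e: "(\<Sum>v\<in>set (x # y # zs). c u v) = c u x + (\<Sum>v\<in>?T. c u v)" by (rule sx)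
    show "(\<Sum>v\<in>set (x # y # zs). c u v) = p u"
    proof (cases "u = x")
      case True
      have "(\<Sum>v\<in>?T. c u v) = (\<Sum>v\<in>?T. la * c' y v)"
        by (rule sum.cong) (use xn xy' xy'' in \<open>auto simp: c_def True\<close>)
      also have "\<dots> = la * p' y" using c'r[of y] by (subst sum_distrib_left[symmetric]) simp
      finally show ?thesis using e True la_sum unfolding c_def a_def b_def by simp
    next
      case False
      note ux = False
      show ?thesis
      proof (cases "u = y")
        case True
        have "(\<Sum>v\<in>?T. c u v) = (\<Sum>v\<in>?T. mu * c' y v)"
          by (rule sum.cong) (use xn xy' xy'' in \<open>auto simp: c_def True xy'\<close>)
        also have "\<dots> = mu * p' y" using c'r[of y] by (subst sum_distrib_left[symmetric]) simp
        finally show ?thesis using e True mu_sum xy' unfolding c_def by simp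
      next
        case False
        have uT: "u \<in> ?T" using u ux by simp
        have "(\<Sum>v\<in>?T. c u v) = (\<Sum>v\<in>?T. c' u v)"
          by (rule sum.cong) (use xn xy' xy'' in \<open>auto simp: c_def False ux\<close>)
        also have "\<dots> = p' u" using c'r[OF uT] .
        finally show ?thesis using e False ux unfolding c_def p'_def by simp
      qed
    qed
  qed
  have col: "\<forall>v\<in>set (x # y # zs). (\<Sum>u\<in>set (x # y # zs). c u v) = q v"
  proof
    fix v assume v: "v \<in> set (x # y # zs)"
    have e: "(\<Sum>u\<in>set (x # y # zs). c u v) = c x v + (\<Sum>u\<in>?T. c u v)" by (rule sx)
    show "(\<Sum>u\<in>set (x # y # zs). c u v) = q v"
    proof (cases "v = x")
      case True
      have "(\<Sum>u\<in>?T. c u v) = 0" by (rule sum.neutral) (use xn xy' xy'' in \<open>auto simp: c_def True\<close>)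
      then show ?thesis using e True unfolding c_def b_def by simp
    next
      case False
      have vT: "v \<in> ?T" using v False by simp
      have e2: "(\<Sum>u\<in>?T. c u v) = c y v + (\<Sum>u\<in>set zs. c u v)" by (rule sy)
      have "(\<Sum>u\<in>set zs. c u v) = (\<Sum>u\<in>set zs. c' u v)"
        by (rule sum.cong) (use xn yn in \<open>auto simp: c_def False\<close>)
      moreover have "c x v + c y v = c' y v" using lamu[OF vT] False xy' unfolding c_def by simp
      ultimately have "(\<Sum>u\<in>set (x # y # zs). c u v) = c' y v + (\<Sum>u\<in>set zs. c' u v)"
        using e e2 by simp
      also have "\<dots> = (\<Sum>u\<in>?T. c' u v)" using sy[of "\<lambda>u. c' u v"] by simp
      also have "\<dots> = q v" using c'c[OF vT] .
      finally show ?thesis .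
    qed
  qed
  define K where "K = (\<Sum>v\<in>?T. c' y v * \<bar>y - v\<bar>)"
  have Kn: "0 \<le> K" unfolding K_def using c'n by (intro sum_nonneg) auto
  have rowx: "(\<Sum>v\<in>set (x # y # zs). c x v * \<bar>x - v\<bar>) \<le> la * K + (a - b) * (y - x)"
  proof -
    have "(\<Sum>v\<in>set (x # y # zs). c x v * \<bar>x - v\<bar>) = (\<Sum>v\<in>?T. la * c' y v * \<bar>x - v\<bar>)"
      by (subst sx) (use xn xy' xy'' in \<open>auto simp: c_def intro!: sum.cong\<close>)
    also have "\<dots> \<le> (\<Sum>v\<in>?T. la * c' y v * \<bar>y - v\<bar> + la * c' y v * (y - x))"
    proof (rule sum_mono)
      fix v
      have "\<bar>x - v\<bar> \<le> \<bar>y - v\<bar> + (y - x)" using xy by linarith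
      then have "la * c' y v * \<bar>x - v\<bar> \<le> la * c' y v * (\<bar>y - v\<bar> + (y - x))"
        using lan c'n by (intro mult_left_mono) auto
      then show "la * c' y v * \<bar>x - v\<bar> \<le> la * c' y v * \<bar>y - v\<bar> + la * c' y v * (y - x)"
        by (simp add: algebra_simps)
    qed
    also have "\<dots> = la * K + la * (\<Sum>v\<in>?T. c' y v) * (y - x)"
      unfolding K_def by (simp add: sum.distrib sum_distrib_left sum_distrib_right mult.assoc)
    also have "\<dots> = la * K + (a - b) * (y - x)" using c'r[of y] la_sum by simp
    finally show ?thesis .
  qed
  have rowy: "(\<Sum>v\<in>set (x # y # zs). c y v * \<bar>y - v\<bar>) = mu * K"
    unfolding K_def by (subst sx) (use xn xy' xy'' in \<open>auto simp: c_def xy' sum_distrib_left mult.assoc intro!: sum.cong\<close>)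
  have rowz: "(\<Sum>v\<in>set (x # y # zs). c u v * \<bar>u - v\<bar>) = (\<Sum>v\<in>?T. c' u v * \<bar>u - v\<bar>)"
    if "u \<in> set zs" for u
  proof -
    have "u \<noteq> x" "u \<noteq> y" using that xn yn by auto
    then show ?thesis by (subst sx) (use xn xy' xy'' in \<open>auto simp: c_def intro!: sum.cong\<close>)
  qed
  have "(\<Sum>u\<in>set (x # y # zs). \<Sum>v\<in>set (x # y # zs). c u v * \<bar>u - v\<bar>)
     = (\<Sum>v\<in>set (x # y # zs). c x v * \<bar>x - v\<bar>) + (\<Sum>v\<in>set (x # y # zs). c y v * \<bar>y - v\<bar>)
       + (\<Sum>u\<in>set zs. \<Sum>v\<in>?T. c' u v * \<bar>u - v\<bar>)"
  proof -
    let ?F = "\<lambda>u. \<Sum>v\<in>set (x # y # zs). c u v * \<bar>u - v\<bar>"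
    have "(\<Sum>u\<in>set (x # y # zs). ?F u) = ?F x + (?F y + (\<Sum>u\<in>set zs. ?F u))"
      using sx[of ?F] sy[of ?F] by simp
    moreover have "(\<Sum>u\<in>set zs. ?F u) = (\<Sum>u\<in>set zs. \<Sum>v\<in>?T. c' u v * \<bar>u - v\<bar>)"
      by (rule sum.cong[OF refl]) (rule rowz)
    ultimately show ?thesis by simp
  qed
  also have "\<dots> \<le> (la + mu) * K + (a - b) * (y - x) + (\<Sum>u\<in>set zs. \<Sum>v\<in>?T. c' u v * \<bar>u - v\<bar>)"
    using rowx rowy by (simp add: algebra_simps)
  also have "\<dots> \<le> K + (a - b) * (y - x) + (\<Sum>u\<in>set zs. \<Sum>v\<in>?T. c' u v * \<bar>u - v\<bar>)"
    using lam1 Kn lan mun by (simp add: mult_left_le_one_le)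
  also have "\<dots> = (a - b) * (y - x) + (\<Sum>u\<in>?T. \<Sum>v\<in>?T. c' u v * \<bar>u - v\<bar>)"
    unfolding K_def by (subst sy[of "\<lambda>u. \<Sum>v\<in>?T. c' u v * \<bar>u - v\<bar>"]) simp
  also have "\<dots> \<le> (a - b) * (y - x) + costA 0 (y # zs) (\<lambda>z. p' z - q z)"
    using c'cost by simp
  also have "costA 0 (y # zs) (\<lambda>z. p' z - q z) = costA (p x - q x) (y # zs) (\<lambda>z. p z - q z)"
  proof -
    have "(\<lambda>z. p' z - q z) = (\<lambda>z. p z - q z)(y := (p y - q y) + (p x - q x))"
      unfolding p'_def a_def b_def by (auto simp: fun_eq_iff)
    then show ?thesis using costA_shift[OF yn, of "\<lambda>z. p z - q z" "p x - q x"] by simp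
  qed
  also have "(a - b) * (y - x) + costA (p x - q x) (y # zs) (\<lambda>z. p z - q z)
       = costA 0 (x # y # zs) (\<lambda>z. p z - q z)"
    using ab unfolding a_def b_def by simp
  finally have cost: "(\<Sum>u\<in>set (x # y # zs). \<Sum>v\<in>set (x # y # zs). c u v * \<bar>u - v\<bar>)
      \<le> costA 0 (x # y # zs) (\<lambda>z. p z - q z)" .
  show ?thesis unfolding cpl_def using cn row col cost by blast
qed

lemma cpl_exists:
  assumes "sorted_wrt (<) xs" "\<forall>u. 0 \<le> p u" "\<forall>u. 0 \<le> q u"
    "(\<Sum>u\<in>set xs. p u) = (\<Sum>u\<in>set xs. q u)"
  shows "\<exists>c. cpl xs p q c"
  using assms
proof (induction xs arbitrary: p q)
  case Nil
  show ?case by (rule exI[of _ "\<lambda>u v. 0"]) (simp add: cpl_def)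
next
  case (Cons x xs)
  show ?case
  proof (cases "xs = []")
    case Nil: True
    have "p x = q x" using Cons.prems Nil by simp
    then show ?thesis using Cons.prems Nil
      by (intro exI[of _ "\<lambda>u v. if u = x \<and> v = x then p x else 0"]) (auto simp: cpl_def)
  next
    case False
    then obtain y zs where Cons2: "xs = y # zs" by (cases xs) auto
    have so: "sorted_wrt (<) (y # zs)" using Cons.prems(1) Cons2 by simp
    have xy: "x < y" using Cons.prems(1) Cons2 by simp
    have xn: "x \<notin> set (y # zs)" using Cons.prems(1) Cons2 by auto
    have yn: "y \<notin> set zs" using so by auto
    have IH: "\<And>p q. (\<forall>u. 0 \<le> p u) \<Longrightarrow> (\<forall>u. 0 \<le> q u) \<Longrightarrow>
        (\<Sum>u\<in>set (y # zs). p u) = (\<Sum>u\<in>set (y # zs). q u) \<Longrightarrow> \<exists>c. cpl (y # zs) p q c"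
      using Cons.IH so Cons2 by blast
    show ?thesis
    proof (cases "q x \<le> p x")
      case True
      show ?thesis unfolding Cons2
        by (rule cpl_step[OF IH xy xn yn]) (use Cons.prems Cons2 True in auto)
    next
      case False
      have "\<exists>c. cpl (x # y # zs) q p c"
        by (rule cpl_step[OF IH xy xn yn]) (use Cons.prems Cons2 False in auto)
      then obtain c where "cpl (x # y # zs) q p c" by blast
      then show ?thesis unfolding Cons2 using cpl_swap by blast
    qed
  qed
qed

lemma sum_list_filter_map:
  assumes "distinct zs"
  shows "sum_list (map snd (filter (\<lambda>w. fst w \<in> A) (map (\<lambda>z. (z, f z)) zs))) = (\<Sum>z\<in>set zs \<inter> A. f z)"
  using assms
proof (induction zs)
  case Nil then show ?case by simp
next
  case (Cons z zs)
  show ?case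
  proof (cases "z \<in> A")
    case True
    have "set (z # zs) \<inter> A = insert z (set zs \<inter> A)" using True by auto
    then show ?thesis using Cons True by (simp add: sum.insert)
  next
    case False
    have "set (z # zs) \<inter> A = set zs \<inter> A" using False by auto
    then show ?thesis using Cons False by simp
  qed
qed

lemma W1_le_cpl:
  assumes d: "distinct xs" and s1: "set_pmf \<nu> \<subseteq> set xs" and s2: "set_pmf \<nu>' \<subseteq> set xs"
    and c: "cpl xs (pmf \<nu>) (pmf \<nu>') c"
  shows "W1 \<nu> \<nu>' \<le> (\<Sum>u\<in>set xs. \<Sum>v\<in>set xs. c u v * \<bar>u - v\<bar>)"
proof -
  let ?S = "set xs"
  define zs where "zs = List.product xs xs"
  define f where "f = (\<lambda>z. c (fst z) (snd z))"
  define L where "L = map (\<lambda>z. (z, f z)) zs"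
  define r where "r = pmf_of_list L"
  have dz: "distinct zs" unfolding zs_def using d by (simp add: distinct_product)
  have sz: "set zs = ?S \<times> ?S" unfolding zs_def by simp
  have cn: "\<And>u v. 0 \<le> c u v" using c unfolding cpl_def by blast
  have cr: "\<And>u. u \<in> ?S \<Longrightarrow> (\<Sum>v\<in>?S. c u v) = pmf \<nu> u" using c unfolding cpl_def by blast
  have cc: "\<And>v. v \<in> ?S \<Longrightarrow> (\<Sum>u\<in>?S. c u v) = pmf \<nu>' v" using c unfolding cpl_def by blast
  have gen: "sum_list (map snd (filter (\<lambda>w. fst w \<in> A) L)) = (\<Sum>z\<in>(?S \<times> ?S) \<inter> A. f z)" for A
    unfolding L_def using sum_list_filter_map[OF dz, of A f] sz by simp
  have tot: "sum_list (map snd L) = 1"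
  proof -
    have "sum_list (map snd L) = sum_list (map snd (filter (\<lambda>w. fst w \<in> UNIV) L))" by simp
    also have "\<dots> = (\<Sum>z\<in>?S \<times> ?S. f z)" using gen[of UNIV] by simp
    also have "\<dots> = (\<Sum>u\<in>?S. \<Sum>v\<in>?S. c u v)" unfolding f_def by (simp add: sum.cartesian_product case_prod_unfold)
    also have "\<dots> = (\<Sum>u\<in>?S. pmf \<nu> u)" using cr by simp
    also have "\<dots> = 1" using s1 by (intro sum_pmf_eq_1) auto
    finally show ?thesis .
  qed
  have wf: "pmf_of_list_wf L"
    by (rule pmf_of_list_wfI[OF _ tot]) (auto simp: L_def f_def cn)
  have meas: "measure r A = (\<Sum>z\<in>(?S \<times> ?S) \<inter> A. f z)" for A
    unfolding r_def using measure_pmf_of_list[OF wf, of A] gen[of A] by simp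
  have m1: "map_pmf fst r = \<nu>"
  proof (rule pmf_eqI)
    fix u
    have "pmf (map_pmf fst r) u = (\<Sum>z\<in>(?S \<times> ?S) \<inter> fst -` {u}. f z)" by (simp add: pmf_map meas)
    also have "\<dots> = pmf \<nu> u"
    proof (cases "u \<in> ?S")
      case True
      then have "(?S \<times> ?S) \<inter> fst -` {u} = {u} \<times> ?S" by auto
      moreover have "(\<Sum>z\<in>{u} \<times> ?S. f z) = (\<Sum>v\<in>?S. f (u, v))"
        by (rule sum.reindex_bij_witness[of _ "\<lambda>v. (u, v)" "\<lambda>z. snd z"]) auto
      ultimately show ?thesis using cr[OF True] unfolding f_def by simp
    next
      case False
      then have "(?S \<times> ?S) \<inter> fst -` {u} = {}" by auto
      moreover have "pmf \<nu> u = 0" using False s1 by (auto simp: set_pmf_eq)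
      ultimately show ?thesis by simp
    qed
    finally show "pmf (map_pmf fst r) u = pmf \<nu> u" .
  qed
  have m2: "map_pmf snd r = \<nu>'"
  proof (rule pmf_eqI)
    fix v
    have "pmf (map_pmf snd r) v = (\<Sum>z\<in>(?S \<times> ?S) \<inter> snd -` {v}. f z)" by (simp add: pmf_map meas)
    also have "\<dots> = pmf \<nu>' v"
    proof (cases "v \<in> ?S")
      case True
      then have "(?S \<times> ?S) \<inter> snd -` {v} = ?S \<times> {v}" by auto
      moreover have "(\<Sum>z\<in>?S \<times> {v}. f z) = (\<Sum>u\<in>?S. f (u, v))"
        by (rule sum.reindex_bij_witness[of _ "\<lambda>u. (u, v)" "\<lambda>z. fst z"]) auto
      ultimately show ?thesis using cc[OF True] unfolding f_def by simp
    next
      case False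
      then have "(?S \<times> ?S) \<inter> snd -` {v} = {}" by auto
      moreover have "pmf \<nu>' v = 0" using False s2 by (auto simp: set_pmf_eq)
      ultimately show ?thesis by simp
    qed
    finally show "pmf (map_pmf snd r) v = pmf \<nu>' v" .
  qed
  have pr: "pmf r z = (if z \<in> ?S \<times> ?S then f z else 0)" for z
  proof -
    have "pmf r z = measure r {z}" by (simp add: measure_pmf_single)
    also have "\<dots> = (if z \<in> ?S \<times> ?S then f z else 0)" unfolding meas
      by (cases "z \<in> ?S \<times> ?S") auto
    finally show ?thesis .
  qed
  have sr: "set_pmf r \<subseteq> ?S \<times> ?S" using pr by (auto simp: set_pmf_eq)
  have E: "measure_pmf.expectation r (\<lambda>(x, y). \<bar>x - y\<bar>) = (\<Sum>u\<in>?S. \<Sum>v\<in>?S. c u v * \<bar>u - v\<bar>)"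
  proof -
    have "measure_pmf.expectation r (\<lambda>(x, y). \<bar>x - y\<bar>) = (\<Sum>a\<in>?S \<times> ?S. (\<lambda>(x, y). \<bar>x - y\<bar>) a * pmf r a)"
      by (rule integral_measure_pmf_real) (use sr in auto)
    also have "\<dots> = (\<Sum>a\<in>?S \<times> ?S. f a * \<bar>fst a - snd a\<bar>)"
      by (rule sum.cong) (auto simp: pr)
    also have "\<dots> = (\<Sum>u\<in>?S. \<Sum>v\<in>?S. c u v * \<bar>u - v\<bar>)"
      unfolding f_def by (simp add: sum.cartesian_product case_prod_unfold)
    finally show ?thesis .
  qed
  let ?X = "{measure_pmf.expectation r (\<lambda>(x, y). \<bar>x - y\<bar>) | r.
                   map_pmf fst r = \<nu> \<and> map_pmf snd r = \<nu>'}"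
  have mem: "measure_pmf.expectation r (\<lambda>(x, y). \<bar>x - y\<bar>) \<in> ?X" using m1 m2 by blast
  have bdd: "bdd_below ?X"
    by (rule bdd_belowI[of _ 0]) (auto intro!: integral_nonneg_AE)
  have "W1 \<nu> \<nu>' \<le> measure_pmf.expectation r (\<lambda>(x, y). \<bar>x - y\<bar>)"
    unfolding W1_def by (rule cInf_lower[OF mem bdd])
  then show ?thesis using E by simp
qed

lemma coeff_sum_bound:
  fixes y :: "'k \<Rightarrow> real"
  assumes "finite K" "\<forall>k\<in>K. \<bar>y k\<bar> \<le> 1"
  shows "(\<Sum>n<N. \<bar>coeff (\<Prod>k\<in>K. [:- y k, 1:]) n\<bar>) \<le> 2 ^ card K"
  using assms
proof (induction K arbitrary: N rule: finite_induct)
  case empty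
  have "(\<Sum>n<N. \<bar>coeff (1::real poly) n\<bar>) = (if N = 0 then 0 else 1)"
    by (induction N) (auto simp: coeff_1)
  then show ?case by simp
next
  case (insert k F)
  define R where "R = (\<Prod>k\<in>F. [:- y k, 1:])"
  have IH: "\<And>N. (\<Sum>n<N. \<bar>coeff R n\<bar>) \<le> 2 ^ card F" using insert unfolding R_def by auto
  have yk: "\<bar>y k\<bar> \<le> 1" using insert by auto
  have eq: "(\<Prod>k\<in>insert k F. [:- y k, 1:]) = smult (- y k) R + pCons 0 R"
    using insert unfolding R_def by (simp add: mult_pCons_left)
  have sh: "(\<Sum>n<N. \<bar>coeff (pCons 0 R) n\<bar>) \<le> (\<Sum>n<N. \<bar>coeff R n\<bar>)"
  proof (cases N)
    case 0 then show ?thesis by simp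
  next
    case (Suc N')
    have "(\<Sum>n<N. \<bar>coeff (pCons 0 R) n\<bar>) = (\<Sum>n<N'. \<bar>coeff R n\<bar>)"
      unfolding Suc by (subst sum.lessThan_Suc_shift) simp
    also have "\<dots> \<le> (\<Sum>n<N. \<bar>coeff R n\<bar>)" unfolding Suc by simp
    finally show ?thesis .
  qed
  have "(\<Sum>n<N. \<bar>coeff (\<Prod>k\<in>insert k F. [:- y k, 1:]) n\<bar>)
      \<le> (\<Sum>n<N. \<bar>coeff R n\<bar> + \<bar>coeff (pCons 0 R) n\<bar>)"
  proof (rule sum_mono)
    fix n
    have "\<bar>- y k * coeff R n\<bar> \<le> \<bar>coeff R n\<bar>"
      using yk by (simp add: abs_mult mult_left_le_one_le)
    then show "\<bar>coeff (\<Prod>k\<in>insert k F. [:- y k, 1:]) n\<bar> \<le> \<bar>coeff R n\<bar> + \<bar>coeff (pCons 0 R) n\<bar>"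
      unfolding eq coeff_add coeff_smult by linarith
  qed
  also have "\<dots> \<le> 2 ^ card F + 2 ^ card F"
    using IH[of N] sh by (simp add: sum.distrib)
  also have "\<dots> = 2 ^ card (insert k F)" using insert by simp
  finally show ?case .
qed

lemma prod_linear_degree:
  fixes y :: "'k \<Rightarrow> real"
  assumes "finite K"
  shows "degree (\<Prod>k\<in>K. [:- y k, 1:]) = card K \<and> coeff (\<Prod>k\<in>K. [:- y k, 1:]) (card K) = 1"
proof -
  have d: "degree (\<Prod>k\<in>K. [:- y k, 1:]) = card K"
    by (subst degree_prod_eq_sum_degree) auto
  have "lead_coeff (\<Prod>k\<in>K. [:- y k, 1:]) = 1"
    by (subst lead_coeff_prod) simp
  then show ?thesis using d by simp
qed

lemma interp:
  fixes xs :: "real list"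
  assumes so: "sorted_wrt (<) xs" and rng: "set xs \<subseteq> {-1..1}"
    and len: "length xs = Suc (Suc m)" and k0: "k0 < Suc m"
  shows "\<exists>P. degree P \<le> Suc m \<and> (\<forall>j < Suc (Suc m). poly P (xs ! j) = (if j \<le> k0 then 1 else 0))
     \<and> (\<Sum>i\<in>{1..Suc m}. \<bar>coeff P i\<bar>) \<le> 2 * 8 ^ m / (xs ! Suc k0 - xs ! k0) ^ Suc m"
proof -
  define L where "L = Suc (Suc m)"
  define X where "X = (\<lambda>j. xs ! j)"
  have Xlt: "\<And>i j. i < j \<Longrightarrow> j < L \<Longrightarrow> X i < X j"
    unfolding X_def L_def using so len by (simp add: sorted_wrt_nth_less)
  have Xle: "\<And>i j. i \<le> j \<Longrightarrow> j < L \<Longrightarrow> X i \<le> X j"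
  proof -
    fix i j :: nat assume h: "i \<le> j" "j < L"
    show "X i \<le> X j"
    proof (cases "i = j")
      case False
      then have "i < j" using h by simp
      then show ?thesis using Xlt h by (simp add: less_imp_le)
    qed simp
  qed
  have Xne: "\<And>i j. i < L \<Longrightarrow> j < L \<Longrightarrow> i \<noteq> j \<Longrightarrow> X i \<noteq> X j"
    using Xlt by (metis linorder_neqE_nat less_irrefl)
  have Xr: "\<And>j. j < L \<Longrightarrow> -1 \<le> X j \<and> X j \<le> 1"
  proof -
    fix j assume "j < L"
    then have "X j \<in> set xs" unfolding X_def L_def using len by simp
    then show "-1 \<le> X j \<and> X j \<le> 1" using rng by auto
  qed
  define P where "P = (\<Sum>j\<le>k0. \<Prod>i\<in>{..<L} - {j}. smult (1 / (X j - X i)) [:- X i, 1:])"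
  have Pval: "poly P (X m') = (if m' \<le> k0 then 1 else 0)" if m': "m' < L" for m'
  proof -
    have trm: "(\<Prod>i\<in>{..<L} - {j}. (1 / (X j - X i)) * (X m' - X i)) = (if j = m' then 1 else 0)"
      if j: "j \<le> k0" for j
    proof (cases "j = m'")
      case True
      have "(\<Prod>i\<in>{..<L} - {j}. (1 / (X j - X i)) * (X m' - X i)) = (\<Prod>i\<in>{..<L} - {j}. 1)"
      proof (rule prod.cong)
        fix i assume "i \<in> {..<L} - {j}"
        then have "X j \<noteq> X i" using Xne[of j i] j k0 unfolding L_def by auto
        then show "(1 / (X j - X i)) * (X m' - X i) = 1" using True by simp
      qed simp
      then show ?thesis using True by simp
    next
      case False
      have "(\<Prod>i\<in>{..<L} - {j}. (1 / (X j - X i)) * (X m' - X i)) = 0"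
        by (rule prod_zero) (use False m' in \<open>auto intro!: bexI[of _ m']\<close>)
      then show ?thesis using False by simp
    qed
    have "poly P (X m') = (\<Sum>j\<le>k0. \<Prod>i\<in>{..<L} - {j}. (1 / (X j - X i)) * (X m' - X i))"
      unfolding P_def by (simp add: poly_sum poly_prod diff_divide_distrib)
    also have "\<dots> = (\<Sum>j\<le>k0. if j = m' then 1 else 0)"
      by (rule sum.cong[OF refl], rule trm) simp
    also have "\<dots> = (if m' \<le> k0 then 1 else 0)" by simp
    finally show ?thesis .
  qed
  have Pdeg: "degree P \<le> Suc m"
    unfolding P_def
  proof (rule degree_sum_le)
    fix j assume "j \<in> {..k0}"
    have "degree (\<Prod>i\<in>{..<L} - {j}. smult (1 / (X j - X i)) [:- X i, 1:])
        \<le> sum (degree \<circ> (\<lambda>i. smult (1 / (X j - X i)) [:- X i, 1:])) ({..<L} - {j})"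
      by (rule degree_prod_sum_le) simp
    also have "\<dots> \<le> (\<Sum>i\<in>{..<L} - {j}. 1)"
      by (rule sum_mono) (simp add: degree_smult_le)
    also have "\<dots> \<le> Suc m" using k0 \<open>j \<in> {..k0}\<close> unfolding L_def by (simp add: card_Diff_singleton)
    finally show "degree (\<Prod>i\<in>{..<L} - {j}. smult (1 / (X j - X i)) [:- X i, 1:]) \<le> Suc m" .
  qed simp
  define D where "D = pderiv P"
  have Ddeg: "degree D \<le> m" unfolding D_def using Pdeg by (simp add: degree_pderiv)
  define K where "K = {..<Suc m} - {k0}"
  have finK: "finite K" unfolding K_def by simp
  have cardK: "card K = m" unfolding K_def using k0 by (simp add: card_Diff_singleton)
  have "\<forall>k\<in>K. \<exists>z. X k < z \<and> z < X (Suc k) \<and> poly D z = 0"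
  proof
    fix k assume kK: "k \<in> K"
    then have kl: "Suc k < L" and kk: "k \<noteq> k0" unfolding K_def L_def by auto
    have lt: "X k < X (Suc k)" using Xlt kl by simp
    obtain z where z: "X k < z" "z < X (Suc k)"
      "poly P (X (Suc k)) - poly P (X k) = (X (Suc k) - X k) * poly (pderiv P) z"
      using poly_MVT[OF lt, of P] by blast
    have "poly P (X (Suc k)) = poly P (X k)" using Pval[OF kl] Pval[of k] kl kk by auto
    then have "poly D z = 0" using z lt unfolding D_def by simp
    then show "\<exists>z. X k < z \<and> z < X (Suc k) \<and> poly D z = 0" using z by blast
  qed
  then obtain y where y: "\<And>k. k \<in> K \<Longrightarrow> X k < y k \<and> y k < X (Suc k) \<and> poly D (y k) = 0"
    by metis
  have ymono: "y k < y k'" if "k \<in> K" "k' \<in> K" "k < k'" for k k'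
  proof -
    have "Suc k \<le> k'" "k' < L" using that unfolding K_def L_def by auto
    then have "X (Suc k) \<le> X k'" using Xle by blast
    then show ?thesis using y[OF that(1)] y[OF that(2)] by linarith
  qed
  have yinj: "inj_on y K"
    by (rule inj_onI) (metis linorder_neqE_nat ymono less_irrefl)
  define a where "a = X k0"
  define b where "b = X (Suc k0)"
  have k0L: "Suc k0 < L" using k0 unfolding L_def by simp
  have ab: "a < b" unfolding a_def b_def using Xlt k0L by simp
  define g where "g = b - a"
  have gpos: "0 < g" unfolding g_def using ab by simp
  have yside: "y k < a \<or> b < y k" if kK: "k \<in> K" for k
  proof (cases "k < k0")
    case True
    then have "X (Suc k) \<le> X k0" using Xle k0L by simp
    then show ?thesis using y[OF kK] unfolding a_def by auto
  next
    case False
    then have "Suc k0 \<le> k" "k < L" using kK unfolding K_def L_def by auto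
    then have "X (Suc k0) \<le> X k" using Xle by blast
    then show ?thesis using y[OF kK] unfolding b_def by auto
  qed
  have yr: "\<forall>k\<in>K. \<bar>y k\<bar> \<le> 1"
  proof
    fix k assume kK: "k \<in> K"
    then have "Suc k < L" unfolding K_def L_def by auto
    then have "-1 \<le> X k" "X (Suc k) \<le> 1" using Xr by auto
    then show "\<bar>y k\<bar> \<le> 1" using y[OF kK] by auto
  qed
  define R where "R = (\<Prod>k\<in>K. [:- y k, 1:])"
  have Rdeg: "degree R = m" and Rlc: "coeff R m = 1"
    using prod_linear_degree[OF finK, of y] cardK unfolding R_def by auto
  have polyR: "poly R t = (\<Prod>k\<in>K. t - y k)" for t unfolding R_def by (simp add: poly_prod)
  define \<alpha> where "\<alpha> = coeff D m"
  have DR: "D = smult \<alpha> R"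
  proof (rule ccontr)
    assume ne: "D \<noteq> smult \<alpha> R"
    define Q where "Q = D - smult \<alpha> R"
    have Q0: "Q \<noteq> 0" using ne unfolding Q_def by simp
    have Qdeg: "degree Q \<le> m" unfolding Q_def
      using Ddeg Rdeg degree_diff_le degree_smult_le by (metis order.trans)
    have Qm: "coeff Q m = 0" unfolding Q_def \<alpha>_def using Rlc by simp
    have Qlt: "degree Q < m"
    proof -
      have "degree Q \<noteq> m" using Qm Q0 by (metis leading_coeff_0_iff)
      then show ?thesis using Qdeg by simp
    qed
    have sub: "y ` K \<subseteq> {x. poly Q x = 0}"
    proof
      fix z assume "z \<in> y ` K"
      then obtain k where kK: "k \<in> K" and z: "z = y k" by blast
      have "poly R (y k) = 0" unfolding polyR by (rule prod_zero) (use finK kK in auto)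
      then show "z \<in> {x. poly Q x = 0}" using y[OF kK] z unfolding Q_def by simp
    qed
    have "m = card (y ` K)" using card_image[OF yinj] cardK by simp
    also have "\<dots> \<le> card {x. poly Q x = 0}" by (rule card_mono[OF poly_roots_finite[OF Q0] sub])
    also have "\<dots> \<le> degree Q" by (rule card_poly_roots_bound[OF Q0])
    finally show False using Qlt by simp
  qed
  have polyD: "poly D t = \<alpha> * poly R t" for t unfolding DR by simp
  have Rpos: "poly R t * poly R a > 0" if "a \<le> t" "t \<le> b" for t
  proof -
    have "poly R t * poly R a = (\<Prod>k\<in>K. (t - y k) * (a - y k))"
      unfolding polyR by (simp add: prod.distrib)
    also have "\<dots> > 0"
    proof (rule prod_pos)
      fix k assume "k \<in> K"
      then have "y k < a \<or> b < y k" by (rule yside)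
      then show "0 < (t - y k) * (a - y k)" using that ab
        by (auto intro: mult_pos_pos mult_neg_neg)
    qed
    finally show ?thesis .
  qed
  have Rlow: "\<bar>poly R t\<bar> \<ge> (g / 4) ^ m" if "a + g / 4 \<le> t" "t \<le> b - g / 4" for t
  proof -
    have "(g / 4) ^ m = (\<Prod>k\<in>K. g / 4)" using cardK by simp
    also have "\<dots> \<le> (\<Prod>k\<in>K. \<bar>t - y k\<bar>)"
    proof (rule prod_mono)
      fix k assume "k \<in> K"
      then have "y k < a \<or> b < y k" by (rule yside)
      then show "0 \<le> g / 4 \<and> g / 4 \<le> \<bar>t - y k\<bar>" using that gpos by auto
    qed
    also have "\<dots> = \<bar>poly R t\<bar>" unfolding polyR by (simp add: abs_prod)
    finally show ?thesis .
  qed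
  have Pa: "poly P a = 1" using Pval[of k0] k0L unfolding a_def by simp
  have Pb: "poly P b = 0" using Pval[OF k0L] unfolding b_def by simp
  have sgn: "\<alpha> * poly R a < 0"
  proof (rule ccontr)
    assume "\<not> \<alpha> * poly R a < 0"
    then have h: "0 \<le> \<alpha> * poly R a" by simp
    obtain \<xi> where xi: "a < \<xi>" "\<xi> < b" "poly P b - poly P a = (b - a) * poly (pderiv P) \<xi>"
      using poly_MVT[OF ab, of P] by blast
    have pr: "0 < poly R \<xi> * poly R a" using Rpos xi by simp
    have "0 \<le> (\<alpha> * poly R a) * (poly R \<xi> * poly R \<xi>)" using h by simp
    also have "(\<alpha> * poly R a) * (poly R \<xi> * poly R \<xi>) = (\<alpha> * poly R \<xi>) * (poly R \<xi> * poly R a)"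
      by (simp add: algebra_simps)
    finally have "0 \<le> \<alpha> * poly R \<xi>" using pr by (simp add: zero_le_mult_iff)
    then have "0 \<le> (b - a) * poly (pderiv P) \<xi>" using ab polyD unfolding D_def by simp
    then show False using xi Pa Pb by simp
  qed
  have Dneg: "poly D t \<le> 0" if "a \<le> t" "t \<le> b" for t
  proof -
    have pr: "0 < poly R t * poly R a" using Rpos that by simp
    have "(\<alpha> * poly R a) * (poly R t * poly R t) \<le> 0"
      using sgn by (simp add: mult_nonpos_nonneg)
    also have "(\<alpha> * poly R a) * (poly R t * poly R t) = (\<alpha> * poly R t) * (poly R t * poly R a)"
      by (simp add: algebra_simps)
    finally have hh: "(\<alpha> * poly R t) * (poly R t * poly R a) \<le> 0" .
    have "\<alpha> * poly R t \<le> 0"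
    proof (rule ccontr)
      assume "\<not> \<alpha> * poly R t \<le> 0"
      then have "0 < (\<alpha> * poly R t) * (poly R t * poly R a)" using pr by (simp add: mult_pos_pos)
      then show False using hh by simp
    qed
    then show ?thesis using polyD by simp
  qed
  define a' where "a' = a + g / 4"
  define b' where "b' = b - g / 4"
  have aa: "a < a'" and ab': "a' < b'" and bb: "b' < b"
    unfolding a'_def b'_def g_def using ab by (auto simp: field_simps)
  obtain \<xi>1 where x1: "a < \<xi>1" "\<xi>1 < a'" "poly P a' - poly P a = (a' - a) * poly D \<xi>1"
    using poly_MVT[OF aa, of P] unfolding D_def by blast
  obtain \<xi>3 where x3: "b' < \<xi>3" "\<xi>3 < b" "poly P b - poly P b' = (b - b') * poly D \<xi>3"
    using poly_MVT[OF bb, of P] unfolding D_def by blast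
  obtain \<xi>2 where x2: "a' < \<xi>2" "\<xi>2 < b'" "poly P b' - poly P a' = (b' - a') * poly D \<xi>2"
    using poly_MVT[OF ab', of P] unfolding D_def by blast
  have "poly D \<xi>1 \<le> 0" using Dneg x1 aa ab' bb by simp
  then have s1: "poly P a' - poly P a \<le> 0" using x1 aa by (simp add: mult_nonneg_nonpos)
  have "poly D \<xi>3 \<le> 0" using Dneg x3 aa ab' bb by simp
  then have s3: "poly P b - poly P b' \<le> 0" using x3 bb by (simp add: mult_nonneg_nonpos)
  have D2: "poly D \<xi>2 \<le> 0" using Dneg x2 aa ab' bb by simp
  have "\<bar>poly D \<xi>2\<bar> = \<bar>\<alpha>\<bar> * \<bar>poly R \<xi>2\<bar>" using polyD by (simp add: abs_mult)
  also have "\<dots> \<ge> \<bar>\<alpha>\<bar> * (g / 4) ^ m"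
    using Rlow[of \<xi>2] x2 unfolding a'_def b'_def by (simp add: mult_left_mono)
  finally have D2b: "\<bar>\<alpha>\<bar> * (g / 4) ^ m \<le> - poly D \<xi>2" using D2 by simp
  have bma: "b' - a' = g / 2" unfolding a'_def b'_def g_def by (simp add: field_simps)
  have "(g / 2) * (\<bar>\<alpha>\<bar> * (g / 4) ^ m) \<le> (g / 2) * (- poly D \<xi>2)"
    using D2b gpos by (intro mult_left_mono) auto
  also have "\<dots> = poly P a' - poly P b'" using x2 bma by simp
  also have "\<dots> \<le> 1" using s1 s3 Pa Pb by simp
  finally have ab1: "\<bar>\<alpha>\<bar> * ((g / 2) * (g / 4) ^ m) \<le> 1" by (simp add: algebra_simps)
  have gg: "(g / 2) * (g / 4) ^ m = g ^ Suc m / (2 * 4 ^ m)"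
    by (simp add: power_divide)
  have alb: "\<bar>\<alpha>\<bar> \<le> 2 * 4 ^ m / g ^ Suc m"
    using ab1 gpos unfolding gg by (simp add: field_simps)
  have cs: "(\<Sum>i\<in>{1..Suc m}. \<bar>coeff P i\<bar>) = (\<Sum>n<Suc m. \<bar>coeff P (Suc n)\<bar>)"
  proof -
    have "{1..Suc m} = {Suc 0..Suc m}" by simp
    then have "(\<Sum>i\<in>{1..Suc m}. \<bar>coeff P i\<bar>) = (\<Sum>n\<in>{0..m}. \<bar>coeff P (Suc n)\<bar>)"
      by (simp only: sum.shift_bounds_cl_Suc_ivl)
    also have "\<dots> = (\<Sum>n<Suc m. \<bar>coeff P (Suc n)\<bar>)" by (simp add: atLeast0AtMost lessThan_Suc_atMost)
    finally show ?thesis .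
  qed
  have "(\<Sum>n<Suc m. \<bar>coeff P (Suc n)\<bar>) \<le> (\<Sum>n<Suc m. \<bar>coeff D n\<bar>)"
  proof (rule sum_mono)
    fix n
    have "coeff D n = of_nat (Suc n) * coeff P (Suc n)" unfolding D_def by (simp add: coeff_pderiv)
    then have "\<bar>coeff D n\<bar> = real (Suc n) * \<bar>coeff P (Suc n)\<bar>" by (simp add: abs_mult)
    also have "\<dots> \<ge> 1 * \<bar>coeff P (Suc n)\<bar>" by (intro mult_right_mono) auto
    finally show "\<bar>coeff P (Suc n)\<bar> \<le> \<bar>coeff D n\<bar>" by simp
  qed
  also have "\<dots> = \<bar>\<alpha>\<bar> * (\<Sum>n<Suc m. \<bar>coeff R n\<bar>)"
    unfolding DR by (simp add: abs_mult sum_distrib_left del: sum.lessThan_Suc)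
  also have "\<dots> \<le> (2 * 4 ^ m / g ^ Suc m) * 2 ^ m"
  proof (rule mult_mono)
    show "(\<Sum>n<Suc m. \<bar>coeff R n\<bar>) \<le> 2 ^ m"
      using coeff_sum_bound[OF finK yr, of "Suc m"] cardK unfolding R_def by simp
  qed (use alb gpos in auto)
  also have "\<dots> = 2 * 8 ^ m / g ^ Suc m"
  proof -
    have "(8::real) ^ m = 4 ^ m * 2 ^ m" by (simp add: power_mult_distrib[symmetric])
    then show ?thesis by simp
  qed
  finally have fin: "(\<Sum>i\<in>{1..Suc m}. \<bar>coeff P i\<bar>) \<le> 2 * 8 ^ m / g ^ Suc m" using cs by simp
  show ?thesis
    apply (rule exI[of _ P])
    using Pdeg Pval fin unfolding X_def L_def g_def a_def b_def by auto
qed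

lemma divmul: "(G::real) \<noteq> 0 \<Longrightarrow> \<delta> * (a / G) * G = \<delta> * a"
  by simp

lemma numeric:
  fixes D g \<delta> :: real
  assumes D0: "0 \<le> D" and D1: "D \<le> 1" and g: "0 < g" and d0: "0 \<le> \<delta>"
    and Db: "D \<le> \<delta> * (2 * 8 ^ m / g ^ Suc m)"
  shows "D * g \<le> 8 * \<delta> powr (1 / real (Suc m))"
proof -
  have gp: "0 < g ^ Suc m" using g by simp
  have "D ^ Suc m \<le> D"
  proof -
    have "D ^ m \<le> 1" using D0 D1 by (rule power_le_one)
    then have "D * D ^ m \<le> D * 1" using D0 by (rule mult_left_mono)
    then show ?thesis by simp
  qed
  then have "(D * g) ^ Suc m \<le> D * g ^ Suc m"
    using gp by (simp only: power_mult_distrib) (rule mult_right_mono, simp_all)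
  also have "\<dots> \<le> \<delta> * (2 * 8 ^ m / g ^ Suc m) * g ^ Suc m"
    using Db gp by (intro mult_right_mono) auto
  also have "\<dots> = \<delta> * (2 * 8 ^ m)" by (rule divmul) (use gp in linarith)
  also have "\<dots> \<le> \<delta> * 8 ^ Suc m" using d0 by (intro mult_left_mono) auto
  also have "\<dots> = (8 * \<delta> powr (1 / real (Suc m))) ^ Suc m"
  proof (cases "\<delta> = 0")
    case True then show ?thesis by simp
  next
    case False
    then have dp: "0 < \<delta>" using d0 by simp
    have "(\<delta> powr (1 / real (Suc m))) ^ Suc m = (\<delta> powr (1 / real (Suc m))) powr real (Suc m)"
      by (rule powr_realpow[symmetric]) (use dp in simp)
    also have "\<dots> = \<delta>" using dp by (simp add: powr_powr)
    finally show ?thesis by (simp add: power_mult_distrib)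
  qed
  finally show ?thesis by (rule power_le_imp_le_base) simp
qed

lemma poly_deg_le:
  fixes p :: "real poly"
  assumes "degree p \<le> n"
  shows "poly p x = (\<Sum>i\<le>n. coeff p i * x ^ i)"
proof -
  have "poly p x = (\<Sum>i\<le>degree p. coeff p i * x ^ i)" by (rule poly_altdef)
  also have "\<dots> = (\<Sum>i\<le>n. coeff p i * x ^ i)"
    by (rule sum.mono_neutral_left) (use assms in \<open>auto simp: coeff_eq_0\<close>)
  finally show ?thesis .
qed

lemma gap_bound:
  fixes xs :: "real list" and \<nu> \<nu>' :: "real pmf"
  assumes so: "sorted_wrt (<) xs" and rng: "set xs \<subseteq> {-1..1}"
    and len: "length xs = Suc (Suc m)" and k: "k < Suc m"
    and s1: "set_pmf \<nu> \<subseteq> set xs" and s2: "set_pmf \<nu>' \<subseteq> set xs"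
    and mom: "\<forall>i\<in>{1..Suc m}. \<bar>moment i \<nu> - moment i \<nu>'\<bar> \<le> \<delta>"
    and d0: "0 \<le> \<delta>"
  shows "\<bar>(\<Sum>j\<le>k. pmf \<nu> (xs ! j) - pmf \<nu>' (xs ! j))\<bar> * (xs ! Suc k - xs ! k)
           \<le> 8 * \<delta> powr (1 / real (Suc m))"
proof -
  let ?S = "set xs"
  let ?L = "Suc (Suc m)"
  define d where "d = (\<lambda>z. pmf \<nu> z - pmf \<nu>' z)"
  define g where "g = xs ! Suc k - xs ! k"
  have gpos: "0 < g" unfolding g_def using so len k by (simp add: sorted_wrt_nth_less)
  obtain P where Pdeg: "degree P \<le> Suc m"
    and Pval: "\<forall>j < ?L. poly P (xs ! j) = (if j \<le> k then 1 else 0)"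
    and Pc: "(\<Sum>i\<in>{1..Suc m}. \<bar>coeff P i\<bar>) \<le> 2 * 8 ^ m / g ^ Suc m"
    using interp[OF so rng len k] unfolding g_def by blast
  have dist: "distinct xs" using so by (simp add: strict_sorted_iff)
  have img: "(!) xs ` {..<?L} = ?S" using len by (auto simp: in_set_conv_nth)
  have reidx: "(\<Sum>j<?L. f (xs ! j)) = (\<Sum>z\<in>?S. f z)" for f :: "real \<Rightarrow> real"
  proof -
    have "(\<Sum>z\<in>?S. f z) = (\<Sum>z\<in>(!) xs ` {..<?L}. f z)" using img by simp
    also have "\<dots> = (\<Sum>j<?L. f (xs ! j))"
      by (subst sum.reindex) (use inj_on_nth[OF dist, of "{..<?L}"] len in auto)
    finally show ?thesis by simp
  qed
  define Dk where "Dk = (\<Sum>j\<le>k. pmf \<nu> (xs ! j) - pmf \<nu>' (xs ! j))"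
  have kL: "k < ?L" using k by simp
  have Dk1: "Dk = (\<Sum>j<?L. d (xs ! j) * poly P (xs ! j))"
  proof -
    have "(\<Sum>j<?L. d (xs ! j) * poly P (xs ! j)) = (\<Sum>j<?L. if j \<le> k then d (xs ! j) else 0)"
      by (rule sum.cong) (simp_all add: Pval)
    also have "\<dots> = (\<Sum>j\<in>{j\<in>{..<?L}. j \<le> k}. d (xs ! j))"
      by (rule sum.inter_filter[symmetric]) simp
    also have "{j\<in>{..<?L}. j \<le> k} = {..k}" using kL by auto
    finally show ?thesis unfolding Dk_def d_def by simp
  qed
  have momeq: "moment i \<mu> = (\<Sum>z\<in>?S. z ^ i * pmf \<mu> z)" if "set_pmf \<mu> \<subseteq> ?S" for i \<mu>
    unfolding moment_def by (rule integral_measure_pmf_real) (use that in auto)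
  define Mo where "Mo = (\<lambda>i. \<Sum>z\<in>?S. d z * z ^ i)"
  have Mo_eq: "Mo i = moment i \<nu> - moment i \<nu>'" for i
    unfolding Mo_def d_def momeq[OF s1] momeq[OF s2]
    by (simp add: sum_subtractf algebra_simps)
  have Mo0: "Mo 0 = 0"
  proof -
    have "Mo 0 = (\<Sum>z\<in>?S. pmf \<nu> z) - (\<Sum>z\<in>?S. pmf \<nu>' z)"
      unfolding Mo_def d_def by (simp add: sum_subtractf)
    also have "\<dots> = 0" using sum_pmf_eq_1[OF _ s1] sum_pmf_eq_1[OF _ s2] by simp
    finally show ?thesis .
  qed
  have "Dk = (\<Sum>z\<in>?S. d z * poly P z)" using Dk1 reidx[of "\<lambda>z. d z * poly P z"] by simp
  also have "\<dots> = (\<Sum>z\<in>?S. \<Sum>i\<le>Suc m. coeff P i * (d z * z ^ i))"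
    by (simp add: poly_deg_le[OF Pdeg] sum_distrib_left algebra_simps)
  also have "\<dots> = (\<Sum>i\<le>Suc m. coeff P i * Mo i)"
    unfolding Mo_def by (subst sum.swap) (simp add: sum_distrib_left)
  also have "\<dots> = (\<Sum>i\<in>{1..Suc m}. coeff P i * Mo i)"
  proof -
    have "{..Suc m} = insert 0 {1..Suc m}" by auto
    then show ?thesis using Mo0 by simp
  qed
  finally have Dsum: "Dk = (\<Sum>i\<in>{1..Suc m}. coeff P i * Mo i)" .
  have "\<bar>Dk\<bar> \<le> (\<Sum>i\<in>{1..Suc m}. \<bar>coeff P i\<bar> * \<delta>)"
  proof -
    have "\<bar>Dk\<bar> \<le> (\<Sum>i\<in>{1..Suc m}. \<bar>coeff P i * Mo i\<bar>)" unfolding Dsum by (rule sum_abs)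
    also have "\<dots> \<le> (\<Sum>i\<in>{1..Suc m}. \<bar>coeff P i\<bar> * \<delta>)"
    proof (rule sum_mono)
      fix i assume "i \<in> {1..Suc m}"
      then have "\<bar>Mo i\<bar> \<le> \<delta>" using mom Mo_eq by simp
      then show "\<bar>coeff P i * Mo i\<bar> \<le> \<bar>coeff P i\<bar> * \<delta>"
        by (simp add: abs_mult mult_left_mono)
    qed
    finally show ?thesis .
  qed
  also have "\<dots> = \<delta> * (\<Sum>i\<in>{1..Suc m}. \<bar>coeff P i\<bar>)"
    unfolding sum_distrib_left by (simp add: mult.commute)
  also have "\<dots> \<le> \<delta> * (2 * 8 ^ m / g ^ Suc m)" using Pc d0 by (rule mult_left_mono)
  finally have Db: "\<bar>Dk\<bar> \<le> \<delta> * (2 * 8 ^ m / g ^ Suc m)" .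
  have part: "0 \<le> (\<Sum>j\<le>k. pmf \<mu> (xs ! j)) \<and> (\<Sum>j\<le>k. pmf \<mu> (xs ! j)) \<le> 1"
    if "set_pmf \<mu> \<subseteq> ?S" for \<mu>
  proof
    show "0 \<le> (\<Sum>j\<le>k. pmf \<mu> (xs ! j))" by (simp add: sum_nonneg)
    have "(\<Sum>j\<le>k. pmf \<mu> (xs ! j)) \<le> (\<Sum>j<?L. pmf \<mu> (xs ! j))"
      by (rule sum_mono2) (use kL in auto)
    also have "\<dots> = (\<Sum>z\<in>?S. pmf \<mu> z)" by (rule reidx)
    also have "\<dots> = 1" using sum_pmf_eq_1[OF _ that] by simp
    finally show "(\<Sum>j\<le>k. pmf \<mu> (xs ! j)) \<le> 1" .
  qed
  have D1: "\<bar>Dk\<bar> \<le> 1"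
  proof -
    define SA where "SA = (\<Sum>j\<le>k. pmf \<nu> (xs ! j))"
    define SB where "SB = (\<Sum>j\<le>k. pmf \<nu>' (xs ! j))"
    have e: "Dk = SA - SB" unfolding Dk_def SA_def SB_def by (rule sum_subtractf)
    have "0 \<le> SA" "SA \<le> 1" using part[OF s1] unfolding SA_def by auto
    moreover have "0 \<le> SB" "SB \<le> 1" using part[OF s2] unfolding SB_def by auto
    ultimately show ?thesis unfolding e by (simp add: abs_le_iff)
  qed
  have "\<bar>Dk\<bar> * g \<le> 8 * \<delta> powr (1 / real (Suc m))"
    by (rule numeric[OF _ D1 gpos d0 Db]) simp
  then show ?thesis unfolding Dk_def g_def .
qed

theorem proposition10:
  "\<exists>C>0. \<forall>(l::nat) (\<delta>::real) (\<nu>::real pmf) (\<nu>'::real pmf).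
      2 \<le> l \<and>
      finite (set_pmf \<nu> \<union> set_pmf \<nu>') \<and>
      card (set_pmf \<nu> \<union> set_pmf \<nu>') = l \<and>
      set_pmf \<nu> \<union> set_pmf \<nu>' \<subseteq> {-1..1} \<and>
      (\<forall>i\<in>{1..l-1}. \<bar>moment i \<nu> - moment i \<nu>'\<bar> \<le> \<delta>)
      \<longrightarrow> W1 \<nu> \<nu>' \<le> C * real l * \<delta> powr (1 / (real l - 1))"
proof (rule exI[of _ 8], intro conjI allI impI)
  fix l :: nat and \<delta> :: real and \<nu> \<nu>' :: "real pmf"
  assume H: "2 \<le> l \<and>
      finite (set_pmf \<nu> \<union> set_pmf \<nu>') \<and>
      card (set_pmf \<nu> \<union> set_pmf \<nu>') = l \<and>
      set_pmf \<nu> \<union> set_pmf \<nu>' \<subseteq> {-1..1} \<and>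
      (\<forall>i\<in>{1..l-1}. \<bar>moment i \<nu> - moment i \<nu>'\<bar> \<le> \<delta>)"
  define S where "S = set_pmf \<nu> \<union> set_pmf \<nu>'"
  have l2: "2 \<le> l" and finS: "finite S" and cS: "card S = l" and rS: "S \<subseteq> {-1..1}"
    and mom: "\<forall>i\<in>{1..l-1}. \<bar>moment i \<nu> - moment i \<nu>'\<bar> \<le> \<delta>"
    using H unfolding S_def by auto
  define m where "m = l - 2"
  have lm: "l = Suc (Suc m)" using l2 unfolding m_def by simp
  define xs where "xs = sorted_list_of_set S"
  have sx: "set xs = S" unfolding xs_def using finS by simp
  have so: "sorted_wrt (<) xs" unfolding xs_def by (simp add: strict_sorted_iff)
  have len: "length xs = Suc (Suc m)" unfolding xs_def using cS lm by simp
  have dist: "distinct xs" unfolding xs_def by simp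
  have s1: "set_pmf \<nu> \<subseteq> set xs" and s2: "set_pmf \<nu>' \<subseteq> set xs" unfolding sx S_def by auto
  have mom': "\<forall>i\<in>{1..Suc m}. \<bar>moment i \<nu> - moment i \<nu>'\<bar> \<le> \<delta>" using mom lm by simp
  have d0: "0 \<le> \<delta>" using mom'[rule_format, of 1] by simp
  have sums: "(\<Sum>u\<in>set xs. pmf \<nu> u) = (\<Sum>u\<in>set xs. pmf \<nu>' u)"
    using sum_pmf_eq_1[OF _ s1] sum_pmf_eq_1[OF _ s2] by simp
  have n1: "\<forall>u. 0 \<le> pmf \<nu> u" and n2: "\<forall>u. 0 \<le> pmf \<nu>' u" by simp_all
  obtain c where c: "cpl xs (pmf \<nu>) (pmf \<nu>') c"
    using cpl_exists[OF so n1 n2 sums] by blast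
  have "W1 \<nu> \<nu>' \<le> (\<Sum>u\<in>set xs. \<Sum>v\<in>set xs. c u v * \<bar>u - v\<bar>)"
    by (rule W1_le_cpl[OF dist s1 s2 c])
  also have "\<dots> \<le> costA 0 xs (\<lambda>z. pmf \<nu> z - pmf \<nu>' z)" using c unfolding cpl_def by (elim conjE)
  also have "\<dots> \<le> real (length xs - 1) * (8 * \<delta> powr (1 / real (Suc m)))"
  proof (rule costA_bound, intro allI impI)
    fix k assume "Suc k < length xs"
    then have k: "k < Suc m" using len by simp
    have "\<bar>(\<Sum>j\<le>k. pmf \<nu> (xs ! j) - pmf \<nu>' (xs ! j))\<bar> * (xs ! Suc k - xs ! k)
           \<le> 8 * \<delta> powr (1 / real (Suc m))"
      by (rule gap_bound[OF so _ len k s1 s2 mom' d0]) (use rS sx in simp)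
    then show "\<bar>0 + (\<Sum>j\<le>k. pmf \<nu> (xs ! j) - pmf \<nu>' (xs ! j))\<bar> * (xs ! Suc k - xs ! k)
           \<le> 8 * \<delta> powr (1 / real (Suc m))" by simp
  qed
  also have "\<dots> = real (Suc m) * (8 * \<delta> powr (1 / real (Suc m)))" using len by simp
  also have "\<dots> \<le> 8 * real l * \<delta> powr (1 / (real l - 1))"
  proof -
    have e: "real l - 1 = real (Suc m)" using lm by simp
    have P0: "0 \<le> 8 * \<delta> powr (1 / real (Suc m))" by simp
    have "real (Suc m) * (8 * \<delta> powr (1 / real (Suc m))) \<le> real l * (8 * \<delta> powr (1 / real (Suc m)))"
      using lm P0 by (intro mult_right_mono) auto
    then show ?thesis unfolding e by (simp only: mult.assoc mult.left_commute)
  qed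
  finally show "W1 \<nu> \<nu>' \<le> 8 * real l * \<delta> powr (1 / (real l - 1))" .
qed simp

end
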